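(* Let $P$ be a finite poset with $n$ elements and $\theta:P\to[n]$ a bijection. Then $$\hat K_{P,\theta}=\sum_{N\ge n}\ \sum_{w\in\tilde{\mathcal J}_N(P,\theta)}\hat L_{\mathcal C(w)}.$$
   Context: A $(P,\theta)$-multiset-valued partition is a map $\sigma$ from $P$ to nonempty finite multisets of positive integers such that for every covering relation $s\lessdot t$ in $P$: $\max\sigma(s)\le\min\sigma(t)$ if $\theta(s)<\theta(t)$, and $\max\sigma(s)<\min\sigma(t)$ if $\theta(s)>\theta(t)$. $\hat K_{P,\theta}=\sum_\sigma\prod_{r\ge1}x_r^{m_r(\sigma)}$, summed over all such $\sigma$, where $m_r(\sigma)$ is the total multiplicity of $r$ in all the multisets $\sigma(p)$, $p\in P$. A linear multi-extension of $P$ by $[N]$ ($N\ge n$) is a map $e$ from $P$ to nonempty subsets of $[N]$ such that $\max e(x)<\min e(y)$ whenever $x<y$ in $P$, each $i\in[N]$ lies in $e(x)$ for exactly one $x\in P$ (denoted $e^{-1}(i)$), and no $e(x)$ contains both $i$ and $i+1$. $\tilde{\mathcal J}_N(P,\theta)$ is the set of words $\theta(e^{-1}(1))\theta(e^{-1}(2))\cdots\theta(e^{-1}(N))$ over all linear multi-extensions $e$ of $P$ by $[N]$. For a word $w=w_1\cdots w_N$ with no two consecutive letters equal, $\mathcal C(w)=(s_1,s_2-s_1,\dots,N-s_k)$ where $\{s_1<\dots<s_k\}=\{i:w_i>w_{i+1}\}$. For a composition $\alpha=(\alpha_1,\dots,\alpha_k)$ of $m$ with $S_\alpha=\{\alpha_1,\alpha_1+\alpha_2,\dots,\alpha_1+\dots+\alpha_{k-1}\}$,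 $\hat L_\alpha=\sum x^\sigma$ over all sequences $(\sigma_1,\dots,\sigma_m)$ of nonempty finite multisets of positive integers with $\max\sigma_j\le\min\sigma_{j+1}$ for all $j$ and strict inequality when $j\in S_\alpha$, with $x^\sigma$ the monomial counting multiplicities. *)

theory Defs
  imports Complex_Main "HOL-Library.Multiset"
begin

text \<open>Formal power series in x_1, x_2, ... are represented by their coefficient
  functions: a monomial prod_r x_r^(m_r) is the multiset of positive integers in which
  r has multiplicity m_r; a series is a map from monomials to real coefficients.\<close>

text \<open>The finite poset P is a finite carrier set inside an ordered type, with the induced order.\<close>

definition covers :: "'a::order set \<Rightarrow> 'a \<Rightarrow> 'a \<Rightarrow> bool" where
  "covers P s t \<longleftrightarrow> s \<in> P \<and> t \<in> P \<and> s < t \<and> \<not> (\<exists>u\<in>P. s < u \<and> u < t)"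

definition pos_mset :: "nat multiset \<Rightarrow> bool" where
  "pos_mset M \<longleftrightarrow> M \<noteq> {#} \<and> 0 \<notin># M"

definition mmax :: "nat multiset \<Rightarrow> nat" where "mmax M = Max (set_mset M)"
definition mmin :: "nat multiset \<Rightarrow> nat" where "mmin M = Min (set_mset M)"

definition mvp :: "'a::order set \<Rightarrow> ('a \<Rightarrow> nat) \<Rightarrow> ('a \<Rightarrow> nat multiset) \<Rightarrow> bool" where
  "mvp P \<theta> \<sigma> \<longleftrightarrow> (\<forall>p\<in>P. pos_mset (\<sigma> p)) \<and> (\<forall>x. x \<notin> P \<longrightarrow> \<sigma> x = {#}) \<and>
     (\<forall>s t. covers P s t \<longrightarrow>
        (\<theta> s < \<theta> t \<longrightarrow> mmax (\<sigma> s) \<le> mmin (\<sigma> t)) \<and>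
        (\<theta> s > \<theta> t \<longrightarrow> mmax (\<sigma> s) < mmin (\<sigma> t)))"

text \<open>Coefficient of the monomial mu in hat K_{P,theta}.\<close>
definition Khat :: "'a::order set \<Rightarrow> ('a \<Rightarrow> nat) \<Rightarrow> nat multiset \<Rightarrow> real" where
  "Khat P \<theta> \<mu> = real (card {\<sigma>. mvp P \<theta> \<sigma> \<and> (\<Sum>p\<in>P. \<sigma> p) = \<mu>})"

definition lin_multi_ext :: "'a::order set \<Rightarrow> nat \<Rightarrow> ('a \<Rightarrow> nat set) \<Rightarrow> bool" where
  "lin_multi_ext P N e \<longleftrightarrow>
     (\<forall>x\<in>P. e x \<noteq> {} \<and> e x \<subseteq> {1..N}) \<and> (\<forall>x. x \<notin> P \<longrightarrow> e x = {}) \<and>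
     (\<forall>x\<in>P. \<forall>y\<in>P. x < y \<longrightarrow> Max (e x) < Min (e y)) \<and>
     (\<forall>i\<in>{1..N}. \<exists>!x. x \<in> P \<and> i \<in> e x) \<and>
     (\<forall>x\<in>P. \<forall>i. \<not> (i \<in> e x \<and> Suc i \<in> e x))"

definition ext_word :: "'a set \<Rightarrow> ('a \<Rightarrow> nat) \<Rightarrow> nat \<Rightarrow> ('a \<Rightarrow> nat set) \<Rightarrow> nat list" where
  "ext_word P \<theta> N e = map (\<lambda>i. \<theta> (THE x. x \<in> P \<and> i \<in> e x)) [1..<N+1]"

definition Jtilde :: "'a::order set \<Rightarrow> ('a \<Rightarrow> nat) \<Rightarrow> nat \<Rightarrow> nat list set" where
  "Jtilde P \<theta> N = {ext_word P \<theta> N e | e. lin_multi_ext P N e}"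

text \<open>Descent set of a word w_1...w_N (1-indexed positions i with w_i > w_(i+1)) and
  the composition C(w).\<close>
definition descents :: "nat list \<Rightarrow> nat set" where
  "descents w = {i. 1 \<le> i \<and> i < length w \<and> w ! (i - 1) > w ! i}"

definition comp_of_word :: "nat list \<Rightarrow> nat list" where
  "comp_of_word w = (let s = sorted_list_of_set (descents w)
                     in map2 (-) (s @ [length w]) (0 # s))"

definition Sset :: "nat list \<Rightarrow> nat set" where
  "Sset \<alpha> = {sum_list (take j \<alpha>) | j. 1 \<le> j \<and> j < length \<alpha>}"

text \<open>Coefficient of the monomial mu in hat L_alpha; sequences (sigma_1,...,sigma_m) are
  encoded 0-indexed as sigma 0, ..., sigma (m-1), and empty beyond.\<close>
definition Lhat :: "nat list \<Rightarrow> nat multiset \<Rightarrow> real" where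
  "Lhat \<alpha> \<mu> = real (card {\<sigma> :: nat \<Rightarrow> nat multiset.
      (\<forall>j. j \<ge> sum_list \<alpha> \<longrightarrow> \<sigma> j = {#}) \<and>
      (\<forall>j < sum_list \<alpha>. pos_mset (\<sigma> j)) \<and>
      (\<forall>j. Suc j < sum_list \<alpha> \<longrightarrow>
          mmax (\<sigma> j) \<le> mmin (\<sigma> (Suc j)) \<and>
          (Suc j \<in> Sset \<alpha> \<longrightarrow> mmax (\<sigma> j) < mmin (\<sigma> (Suc j)))) \<and>
      (\<Sum>j < sum_list \<alpha>. \<sigma> j) = \<mu>})"

end

theory Submission
  imports Defs
begin

definition klt :: "('a \<Rightarrow> nat) \<Rightarrow> nat \<Rightarrow> 'a \<Rightarrow> nat \<Rightarrow> 'a \<Rightarrow> bool" where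
  "klt \<theta> a x b y \<longleftrightarrow> a < b \<or> (a = b \<and> \<theta> x < \<theta> y)"

lemma klt_trans: "klt \<theta> a x b y \<Longrightarrow> klt \<theta> b y c z \<Longrightarrow> klt \<theta> a x c z"
  unfolding klt_def by auto

lemma klt_asym: "klt \<theta> a x b y \<Longrightarrow> klt \<theta> b y a x \<Longrightarrow> False"
  unfolding klt_def by auto

definition chain :: "'a set \<Rightarrow> ('a \<Rightarrow> nat) \<Rightarrow> nat \<Rightarrow> (nat \<Rightarrow> 'a) \<Rightarrow> (nat \<Rightarrow> nat multiset) \<Rightarrow> bool" where
  "chain P \<theta> N lb \<tau> \<longleftrightarrow> (\<forall>j<N. lb j \<in> P \<and> \<tau> j \<noteq> {#}) \<and>
     (\<forall>j. Suc j < N \<longrightarrow> lb j \<noteq> lb (Suc j) \<and>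
        (\<forall>a\<in>#\<tau> j. \<forall>b\<in>#\<tau> (Suc j). klt \<theta> a (lb j) b (lb (Suc j))))"

definition content :: "nat \<Rightarrow> (nat \<Rightarrow> 'a) \<Rightarrow> (nat \<Rightarrow> nat multiset) \<Rightarrow> 'a \<Rightarrow> nat multiset" where
  "content N lb \<tau> x = (\<Sum>j<N. if lb j = x then \<tau> j else {#})"

lemma mem_content: "b \<in># content N lb \<tau> z \<Longrightarrow> \<exists>j<N. lb j = z \<and> b \<in># \<tau> j"
  unfolding content_def by (auto simp: set_mset_sum split: if_splits)

lemma block_sub_content: "j < N \<Longrightarrow> \<tau> j \<subseteq># content N lb \<tau> (lb j)"
proof -
  assume j: "j < N"
  have "content N lb \<tau> (lb j) = (if lb j = lb j then \<tau> j else {#}) + (\<Sum>i\<in>{..<N} - {j}. if lb i = lb j then \<tau> i else {#})"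
    unfolding content_def using j by (subst sum.remove[of _ j]) auto
  then show ?thesis by simp
qed

lemma content_shift: "content (Suc M) lb \<tau> x =
   (if lb 0 = x then \<tau> 0 else {#}) + content M (\<lambda>j. lb (Suc j)) (\<lambda>j. \<tau> (Suc j)) x"
  unfolding content_def by (simp only: sum.lessThan_Suc_shift)

lemma content_0: "content 0 lb \<tau> = (\<lambda>x. {#})"
  unfolding content_def by auto

lemma chain_shift: "chain P \<theta> (Suc M) lb \<tau> \<Longrightarrow> chain P \<theta> M (\<lambda>j. lb (Suc j)) (\<lambda>j. \<tau> (Suc j))"
  unfolding chain_def by auto

lemma chain_sorted:
  assumes c: "chain P \<theta> N lb \<tau>" and ij: "i < j" "j < N"
  shows "\<forall>a\<in>#\<tau> i. \<forall>b\<in>#\<tau> j. klt \<theta> a (lb i) b (lb j)"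
  using ij
proof (induction j)
  case 0 then show ?case by simp
next
  case (Suc k)
  show ?case
  proof (cases "i = k")
    case True then show ?thesis using c Suc.prems unfolding chain_def by auto
  next
    case False
    then have ik: "i < k" using Suc.prems by auto
    have ih: "\<forall>a\<in>#\<tau> i. \<forall>b\<in>#\<tau> k. klt \<theta> a (lb i) b (lb k)" using Suc ik by auto
    have ne: "\<tau> k \<noteq> {#}" using c Suc.prems unfolding chain_def by auto
    then obtain b' where b': "b' \<in># \<tau> k" by blast
    have step: "\<forall>b\<in>#\<tau> (Suc k). klt \<theta> b' (lb k) b (lb (Suc k))" using c Suc.prems b' unfolding chain_def by auto
    show ?thesis
    proof (intro ballI)
      fix a b assume "a \<in># \<tau> i" "b \<in># \<tau> (Suc k)"
      then show "klt \<theta> a (lb i) b (lb (Suc k))" using klt_trans[of \<theta> a "lb i" b' "lb k" b "lb (Suc k)"] ih step b' by blast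
    qed
  qed
qed

lemma FB1:
  assumes c: "chain P \<theta> N lb \<tau>" and "0 < N" "u \<in># \<tau> 0" "z \<noteq> lb 0" "b \<in># content N lb \<tau> z"
  shows "klt \<theta> u (lb 0) b z"
proof -
  obtain j where j: "j < N" "lb j = z" "b \<in># \<tau> j" using mem_content assms by metis
  have "0 < j" using j assms by (cases j) auto
  then show ?thesis using chain_sorted[OF c \<open>0 < j\<close> \<open>j < N\<close>] assms j by auto
qed

lemma FB2:
  assumes c: "chain P \<theta> N lb \<tau>" and "u \<in># \<tau> j" "0 < j" "j < N" "lb j = lb 0"
  shows "\<exists>z b. z \<noteq> lb 0 \<and> b \<in># content N lb \<tau> z \<and> klt \<theta> b z u (lb 0)"
proof -
  have "j \<noteq> Suc 0"
  proof
    assume "j = Suc 0"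
    then show False using c assms unfolding chain_def by (metis lessI)
  qed
  then have j1: "Suc 0 < j" using assms by auto
  have sn: "Suc 0 < N" using j1 assms by auto
  have "\<forall>j. Suc j < N \<longrightarrow> lb j \<noteq> lb (Suc j)" using c unfolding chain_def by blast
  then have n1a: "lb (Suc 0) \<noteq> lb 0" using sn by metis
  have n1b: "\<tau> (Suc 0) \<noteq> {#}" using c sn unfolding chain_def by blast
  note n1 = n1a n1b
  then obtain b where b: "b \<in># \<tau> (Suc 0)" by blast
  have "b \<in># content N lb \<tau> (lb (Suc 0))" using block_sub_content[of "Suc 0" N \<tau> lb] b j1 assms
    by (meson mset_subset_eqD order.strict_trans)
  moreover have "klt \<theta> b (lb (Suc 0)) u (lb 0)" using chain_sorted[OF c j1 \<open>j<N\<close>] b assms by auto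
  ultimately show ?thesis using n1 by blast
qed

definition pred :: "('a \<Rightarrow> nat) \<Rightarrow> ('a \<Rightarrow> nat multiset) \<Rightarrow> 'a \<Rightarrow> nat \<Rightarrow> bool" where
  "pred \<theta> c x u \<longleftrightarrow> (\<forall>z b. z \<noteq> x \<longrightarrow> b \<in># c z \<longrightarrow> klt \<theta> u x b z)"

lemma first_block:
  assumes c: "chain P \<theta> N lb \<tau>" and N: "0 < N"
  shows "\<tau> 0 = filter_mset (pred \<theta> (content N lb \<tau>) (lb 0)) (content N lb \<tau> (lb 0))"
proof -
  obtain M where M: "N = Suc M" using N by (cases N) auto
  define R where "R = content M (\<lambda>j. lb (Suc j)) (\<lambda>j. \<tau> (Suc j)) (lb 0)"
  have eq: "content N lb \<tau> (lb 0) = \<tau> 0 + R" unfolding R_def M content_shift by simp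
  have f1: "filter_mset (pred \<theta> (content N lb \<tau>) (lb 0)) (\<tau> 0) = \<tau> 0"
  proof -
    have "\<forall>u\<in>#\<tau> 0. pred \<theta> (content N lb \<tau>) (lb 0) u"
      unfolding pred_def by (intro ballI allI impI) (rule FB1[OF c N])
    then show ?thesis by (intro filter_mset_eq_conv[THEN iffD2]) auto
  qed
  have f2: "filter_mset (pred \<theta> (content N lb \<tau>) (lb 0)) R = {#}"
  proof -
    have "\<not> pred \<theta> (content N lb \<tau>) (lb 0) u" if u: "u \<in># R" for u
    proof -
      obtain j where j: "j < M" "lb (Suc j) = lb 0" "u \<in># \<tau> (Suc j)"
        using mem_content[OF u[unfolded R_def]] by blast
      obtain z b where zb: "z \<noteq> lb 0" "b \<in># content N lb \<tau> z" "klt \<theta> b z u (lb 0)"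
        using FB2[OF c j(3) _ _ j(2)] j(1) M by (metis Suc_less_eq zero_less_Suc)
      show ?thesis
      proof
        assume "pred \<theta> (content N lb \<tau>) (lb 0) u"
        then have "klt \<theta> u (lb 0) b z" using zb unfolding pred_def by blast
        then show False using zb(3) klt_asym by metis
      qed
    qed
    then show ?thesis by (intro filter_mset_eq_conv[THEN iffD2]) auto
  qed
  have "filter_mset (pred \<theta> (content N lb \<tau>) (lb 0)) (content N lb \<tau> (lb 0)) = \<tau> 0"
    unfolding eq filter_union_mset f1 f2 by simp
  then show ?thesis by simp
qed


lemma chain_nonempty_content:
  assumes "chain P \<theta> N lb \<tau>" "0 < N"
  shows "content N lb \<tau> (lb 0) \<noteq> {#}"
proof -
  have "\<tau> 0 \<noteq> {#}" using assms unfolding chain_def by blast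
  moreover have "\<tau> 0 \<subseteq># content N lb \<tau> (lb 0)" using block_sub_content assms(2) by blast
  ultimately show ?thesis by auto
qed

lemma chain_unique:
  "chain P \<theta> N1 l1 t1 \<Longrightarrow> chain P \<theta> N2 l2 t2 \<Longrightarrow> content N1 l1 t1 = content N2 l2 t2 \<Longrightarrow>
   N1 = N2 \<and> (\<forall>j<N1. l1 j = l2 j \<and> t1 j = t2 j)"
proof (induction N1 arbitrary: N2 l1 t1 l2 t2)
  case 0
  show ?case
  proof (cases N2)
    case 0 then show ?thesis by simp
  next
    case (Suc M2)
    then have "content N2 l2 t2 (l2 0) \<noteq> {#}" using chain_nonempty_content[OF "0.prems"(2)] by simp
    moreover have "content N2 l2 t2 (l2 0) = {#}" using fun_cong[OF "0.prems"(3), of "l2 0"] by (simp add: content_0)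
    ultimately show ?thesis by simp
  qed
next
  case (Suc M)
  note c1 = Suc.prems(1) and c2 = Suc.prems(2) and ce = Suc.prems(3)
  obtain M2 where N2: "N2 = Suc M2"
  proof (cases N2)
    case 0
    have "content (Suc M) l1 t1 (l1 0) \<noteq> {#}" using chain_nonempty_content[OF c1] by simp
    then show ?thesis using ce 0 by (simp add: content_0)
  next
    case (Suc k) then show ?thesis using that by blast
  qed
  have ne1: "t1 0 \<noteq> {#}" using c1 unfolding chain_def by blast
  have ne2: "t2 0 \<noteq> {#}" using c2 N2 unfolding chain_def by blast
  obtain u1 where u1: "u1 \<in># t1 0" using ne1 by blast
  obtain u2 where u2: "u2 \<in># t2 0" using ne2 by blast
  have l0: "l1 0 = l2 0"
  proof (rule ccontr)
    assume ne: "l1 0 \<noteq> l2 0"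
    have "u2 \<in># content N2 l2 t2 (l2 0)" using block_sub_content[of 0 N2 t2 l2] u2 N2 by (auto dest: mset_subset_eqD)
    then have a: "u2 \<in># content (Suc M) l1 t1 (l2 0)" using ce by simp
    have "u1 \<in># content (Suc M) l1 t1 (l1 0)" using block_sub_content[of 0 "Suc M" t1 l1] u1 by (auto dest: mset_subset_eqD)
    then have b: "u1 \<in># content N2 l2 t2 (l1 0)" using ce by simp
    have k1: "klt \<theta> u1 (l1 0) u2 (l2 0)" using FB1[OF c1 _ u1 _ a] ne by simp
    have k2: "klt \<theta> u2 (l2 0) u1 (l1 0)" using FB1[OF c2 _ u2 _ b] ne N2 by simp
    show False using klt_asym[OF k1 k2] .
  qed
  have t0: "t1 0 = t2 0"
    using first_block[OF c1] first_block[OF c2] l0 ce N2 by simp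
  have ce': "content M (\<lambda>j. l1 (Suc j)) (\<lambda>j. t1 (Suc j)) = content M2 (\<lambda>j. l2 (Suc j)) (\<lambda>j. t2 (Suc j))"
  proof (rule ext)
    fix x
    have "(if l1 0 = x then t1 0 else {#}) + content M (\<lambda>j. l1 (Suc j)) (\<lambda>j. t1 (Suc j)) x =
          (if l1 0 = x then t1 0 else {#}) + content M2 (\<lambda>j. l2 (Suc j)) (\<lambda>j. t2 (Suc j)) x"
      using fun_cong[OF ce, of x] unfolding N2 content_shift l0 t0 by simp
    then show "content M (\<lambda>j. l1 (Suc j)) (\<lambda>j. t1 (Suc j)) x = content M2 (\<lambda>j. l2 (Suc j)) (\<lambda>j. t2 (Suc j)) x"
      by (rule add_left_imp_eq)
  qed
  have ih: "M = M2 \<and> (\<forall>j<M. l1 (Suc j) = l2 (Suc j) \<and> t1 (Suc j) = t2 (Suc j))"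
    using Suc.IH[OF chain_shift[OF c1] chain_shift[OF c2[unfolded N2]] ce'] .
  have "\<forall>j<Suc M. l1 j = l2 j \<and> t1 j = t2 j"
  proof (intro allI impI)
    fix j assume "j < Suc M"
    then show "l1 j = l2 j \<and> t1 j = t2 j" using ih l0 t0 by (cases j) auto
  qed
  then show ?case using ih N2 by simp
qed


lemma chain_exists:
  assumes fin: "finite P" and inj: "inj_on \<theta> P"
  shows "(\<forall>x. x \<notin> P \<longrightarrow> c x = {#}) \<Longrightarrow>
    \<exists>N lb \<tau>. chain P \<theta> N lb \<tau> \<and> content N lb \<tau> = c \<and> (\<forall>j\<ge>N. \<tau> j = {#})"
proof (induction "\<Sum>x\<in>P. size (c x)" arbitrary: c rule: less_induct)
  case less
  note out = less.prems
  show ?case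
  proof (cases "\<forall>x\<in>P. c x = {#}")
    case True
    then have "c = (\<lambda>x. {#})" using out by auto
    then have "chain P \<theta> 0 (\<lambda>j. undefined) (\<lambda>j. {#}) \<and> content 0 (\<lambda>j. undefined) (\<lambda>j. {#}) = c \<and> (\<forall>j\<ge>0. (\<lambda>j. {#}) j = ({#}::nat multiset))"
      by (simp add: chain_def content_0)
    then show ?thesis by blast
  next
    case False
    define V where "V = (\<Union>x\<in>P. set_mset (c x))"
    have Vfin: "finite V" unfolding V_def using fin by auto
    have Vne: "V \<noteq> {}" unfolding V_def using False by auto
    define u0 where "u0 = Min V"
    have u0V: "u0 \<in> V" unfolding u0_def using Vfin Vne by (rule Min_in)
    have u0le: "\<And>b. b \<in> V \<Longrightarrow> u0 \<le> b" unfolding u0_def using Vfin by simp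
    define X where "X = {x\<in>P. u0 \<in># c x}"
    have Xfin: "finite X" unfolding X_def using fin by simp
    have Xne: "X \<noteq> {}" using u0V unfolding X_def V_def by auto
    define t0 where "t0 = Min (\<theta> ` X)"
    have "t0 \<in> \<theta> ` X" unfolding t0_def using Xfin Xne by simp
    then obtain x0 where x0X: "x0 \<in> X" and tx0: "\<theta> x0 = t0" by auto
    have x0P: "x0 \<in> P" and u0x0: "u0 \<in># c x0" using x0X unfolding X_def by auto
    have t0le: "\<And>z. z \<in> X \<Longrightarrow> t0 \<le> \<theta> z" unfolding t0_def using Xfin by simp
    have pred0: "pred \<theta> c x0 u0"
      unfolding pred_def
    proof (intro allI impI)
      fix z b assume z: "z \<noteq> x0" and b: "b \<in># c z"
      have zP: "z \<in> P" using b out by (cases "z \<in> P") auto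
      have bV: "b \<in> V" using zP b unfolding V_def by auto
      show "klt \<theta> u0 x0 b z"
      proof (cases "u0 = b")
        case True
        then have "z \<in> X" unfolding X_def using zP b by simp
        then have "\<theta> x0 \<le> \<theta> z" using t0le tx0 by simp
        moreover have "\<theta> x0 \<noteq> \<theta> z" using inj z zP x0P by (metis inj_on_eq_iff)
        ultimately show ?thesis unfolding klt_def using True by simp
      next
        case False
        then show ?thesis using u0le[OF bV] unfolding klt_def by simp
      qed
    qed
    define M where "M = filter_mset (pred \<theta> c x0) (c x0)"
    have u0M: "u0 \<in># M" unfolding M_def using pred0 u0x0 by simp
    have Msub: "M \<subseteq># c x0" unfolding M_def by simp
    have Mne: "M \<noteq> {#}" using u0M by auto
    define c' where "c' = c(x0 := c x0 - M)"
    have out': "\<forall>x. x \<notin> P \<longrightarrow> c' x = {#}" using out x0P unfolding c'_def by auto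
    have diff: "c x0 - M = filter_mset (\<lambda>u. \<not> pred \<theta> c x0 u) (c x0)"
      using multiset_partition[of "c x0" "pred \<theta> c x0"] unfolding M_def
      by (metis add_diff_cancel_left')
    have lt: "(\<Sum>x\<in>P. size (c' x)) < (\<Sum>x\<in>P. size (c x))"
    proof (rule sum_strict_mono_ex1[OF fin])
      show "\<forall>x\<in>P. size (c' x) \<le> size (c x)" unfolding c'_def by (simp add: size_Diff_submset[OF Msub])
      have "size M > 0" using Mne by (simp add: nonempty_has_size)
      moreover have "size M \<le> size (c x0)" using Msub by (rule size_mset_mono)
      ultimately have "size (c' x0) < size (c x0)" unfolding c'_def by (simp add: size_Diff_submset[OF Msub])
      then show "\<exists>a\<in>P. size (c' a) < size (c a)" using x0P by blast
    qed
    obtain N' l' t' where ch': "chain P \<theta> N' l' t'" and ct': "content N' l' t' = c'"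
      and tz: "\<forall>j\<ge>N'. t' j = {#}"
      using less.hyps[OF lt out'] by blast
    define lb where "lb = (\<lambda>j. case j of 0 \<Rightarrow> x0 | Suc i \<Rightarrow> l' i)"
    define \<tau> where "\<tau> = (\<lambda>j. case j of 0 \<Rightarrow> M | Suc i \<Rightarrow> t' i)"
    have sh1: "(\<lambda>j. lb (Suc j)) = l'" unfolding lb_def by simp
    have sh2: "(\<lambda>j. \<tau> (Suc j)) = t'" unfolding \<tau>_def by simp
    have K1: "l' 0 \<noteq> x0" if N'0: "0 < N'"
    proof
      assume eq: "l' 0 = x0"
      have "t' 0 \<noteq> {#}" using ch' N'0 unfolding chain_def by blast
      then obtain u where u: "u \<in># t' 0" by blast
      have "u \<in># content N' l' t' (l' 0)" using block_sub_content[OF N'0, of t' l'] u by (auto dest: mset_subset_eqD)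
      then have "u \<in># c x0 - M" using ct' eq unfolding c'_def by simp
      then have "\<not> pred \<theta> c x0 u" unfolding diff by simp
      then obtain z b where z: "z \<noteq> x0" and b: "b \<in># c z" and nk: "\<not> klt \<theta> u x0 b z"
        unfolding pred_def by blast
      have "b \<in># content N' l' t' z" using ct' z b unfolding c'_def by simp
      then have "klt \<theta> u (l' 0) b z" using FB1[OF ch' N'0 u] z eq by simp
      then show False using nk eq by simp
    qed
    have K2: "klt \<theta> a x0 b (l' 0)" if N'0: "0 < N'" and a: "a \<in># M" and b: "b \<in># t' 0" for a b
    proof -
      have pa: "pred \<theta> c x0 a" using a unfolding M_def by simp
      have "b \<in># content N' l' t' (l' 0)" using block_sub_content[OF N'0, of t' l'] b by (auto dest: mset_subset_eqD)
      then have "b \<in># c (l' 0)" using ct' K1[OF N'0] unfolding c'_def by simp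
      then show ?thesis using pa K1[OF N'0] unfolding pred_def by blast
    qed
    have ch: "chain P \<theta> (Suc N') lb \<tau>"
      unfolding chain_def
    proof (intro conjI allI impI)
      fix j assume j: "j < Suc N'"
      show "lb j \<in> P" using j ch' x0P unfolding lb_def chain_def by (cases j) auto
      show "\<tau> j \<noteq> {#}" using j ch' Mne unfolding \<tau>_def chain_def by (cases j) auto
    next
      fix j assume j: "Suc j < Suc N'"
      show "lb j \<noteq> lb (Suc j)"
      proof (cases j)
        case 0 then show ?thesis using K1 j unfolding lb_def by auto
      next
        case (Suc i) then show ?thesis using j ch' unfolding lb_def chain_def by auto
      qed
      show "\<forall>a\<in>#\<tau> j. \<forall>b\<in>#\<tau> (Suc j). klt \<theta> a (lb j) b (lb (Suc j))"
      proof (cases j)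
        case 0 then show ?thesis using K2 j unfolding lb_def \<tau>_def by auto
      next
        case (Suc i) then show ?thesis using j ch' unfolding lb_def \<tau>_def chain_def by auto
      qed
    qed
    have ct: "content (Suc N') lb \<tau> = c"
    proof (rule ext)
      fix x
      have "content (Suc N') lb \<tau> x = (if x0 = x then M else {#}) + c' x"
        unfolding content_shift sh1 sh2 ct' by (simp add: lb_def \<tau>_def)
      also have "\<dots> = c x" unfolding c'_def using Msub by (auto simp: subset_mset.add_diff_inverse)
      finally show "content (Suc N') lb \<tau> x = c x" .
    qed
    have "\<forall>j\<ge>Suc N'. \<tau> j = {#}"
    proof (intro allI impI)
      fix j assume "Suc N' \<le> j"
      then show "\<tau> j = {#}" using tz unfolding \<tau>_def by (cases j) auto
    qed
    then show ?thesis using ch ct by blast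
  qed
qed


lemma mmax_ge: "a \<in># M \<Longrightarrow> a \<le> mmax M"
  unfolding mmax_def by simp

lemma mmin_le: "a \<in># M \<Longrightarrow> mmin M \<le> a"
  unfolding mmin_def by simp

lemma mmax_in: "M \<noteq> {#} \<Longrightarrow> mmax M \<in># M"
  unfolding mmax_def by (simp add: Max_in)

lemma mmin_in: "M \<noteq> {#} \<Longrightarrow> mmin M \<in># M"
  unfolding mmin_def by (simp add: Min_in)

lemma chain_lbP: "chain P \<theta> N lb \<tau> \<Longrightarrow> j < N \<Longrightarrow> lb j \<in> P"
  unfolding chain_def by blast
lemma chain_ne: "chain P \<theta> N lb \<tau> \<Longrightarrow> j < N \<Longrightarrow> \<tau> j \<noteq> {#}"
  unfolding chain_def by blast
lemma chain_neq: "chain P \<theta> N lb \<tau> \<Longrightarrow> Suc j < N \<Longrightarrow> lb j \<noteq> lb (Suc j)"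
  unfolding chain_def by blast

lemma mvp_cov: "mvp P \<theta> \<sigma> \<Longrightarrow> covers P s t \<Longrightarrow>
  (\<theta> s < \<theta> t \<longrightarrow> mmax (\<sigma> s) \<le> mmin (\<sigma> t)) \<and> (\<theta> s > \<theta> t \<longrightarrow> mmax (\<sigma> s) < mmin (\<sigma> t))"
  unfolding mvp_def by blast

lemma mvp_pos: "mvp P \<theta> \<sigma> \<Longrightarrow> p \<in> P \<Longrightarrow> pos_mset (\<sigma> p)"
  unfolding mvp_def by blast

lemma mvp_out: "mvp P \<theta> \<sigma> \<Longrightarrow> x \<notin> P \<Longrightarrow> \<sigma> x = {#}"
  unfolding mvp_def by blast

lemma mvp_lt:
  fixes P :: "'a::order set"
  assumes fin: "finite P" and inj: "inj_on \<theta> P" and mv: "mvp P \<theta> \<sigma>"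
  shows "x \<in> P \<Longrightarrow> y \<in> P \<Longrightarrow> x < y \<Longrightarrow> a \<in># \<sigma> x \<Longrightarrow> b \<in># \<sigma> y \<Longrightarrow> klt \<theta> a x b y"
proof (induction "card {u\<in>P. x < u \<and> u < y}" arbitrary: x y a b rule: less_induct)
  case less
  show ?case
  proof (cases "\<exists>u\<in>P. x < u \<and> u < y")
    case False
    then have cov: "covers P x y" unfolding covers_def using less.prems by auto
    have ne: "\<theta> x \<noteq> \<theta> y" using inj less.prems by (metis inj_on_eq_iff less_irrefl)
    have a: "a \<le> mmax (\<sigma> x)" using less.prems by (simp add: mmax_ge)
    have b: "mmin (\<sigma> y) \<le> b" using less.prems by (simp add: mmin_le)
    show ?thesis
    proof (cases "\<theta> x < \<theta> y")
      case True
      then have "mmax (\<sigma> x) \<le> mmin (\<sigma> y)" using mvp_cov[OF mv cov] by blast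
      then show ?thesis using a b True unfolding klt_def by auto
    next
      case False
      then have "\<theta> x > \<theta> y" using ne by simp
      then have "mmax (\<sigma> x) < mmin (\<sigma> y)" using mvp_cov[OF mv cov] by blast
      then show ?thesis using a b unfolding klt_def by auto
    qed
  next
    case True
    then obtain u where u: "u \<in> P" "x < u" "u < y" by blast
    have "pos_mset (\<sigma> u)" using mvp_pos[OF mv u(1)] .
    then obtain c where c: "c \<in># \<sigma> u" unfolding pos_mset_def by blast
    have fs: "finite {v\<in>P. x < v \<and> v < y}" using fin by simp
    have l1: "card {v\<in>P. x < v \<and> v < u} < card {v\<in>P. x < v \<and> v < y}"
      by (rule psubset_card_mono[OF fs]) (use u in \<open>auto intro: order.strict_trans\<close>)
    have l2: "card {v\<in>P. u < v \<and> v < y} < card {v\<in>P. x < v \<and> v < y}"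
      by (rule psubset_card_mono[OF fs]) (use u in \<open>auto intro: order.strict_trans\<close>)
    have k1: "klt \<theta> a x c u" using less.hyps[OF l1] less.prems u c by blast
    have k2: "klt \<theta> c u b y" using less.hyps[OF l2] less.prems u c by blast
    show ?thesis using klt_trans[OF k1 k2] .
  qed
qed

lemma content_outside:
  assumes ch: "chain P \<theta> N lb \<tau>" and x: "x \<notin> P"
  shows "content N lb \<tau> x = {#}"
proof (rule ccontr)
  assume "content N lb \<tau> x \<noteq> {#}"
  then obtain a where a: "a \<in># content N lb \<tau> x" by blast
  obtain j where j: "j < N" "lb j = x" "a \<in># \<tau> j" using mem_content[OF a] by blast
  have "lb j \<in> P" using ch j(1) unfolding chain_def by blast
  then show False using j x by simp
qed

lemma content_pos:
  assumes a: "\<forall>j<N. 0 \<notin># \<tau> j"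
  shows "0 \<notin># content N lb \<tau> x"
proof
  assume b: "0 \<in># content N lb \<tau> x"
  obtain j where "j < N" "0 \<in># \<tau> j" using mem_content[OF b] by blast
  then show False using a by blast
qed

lemma valid_to_mvp:
  fixes P :: "'a::order set"
  assumes ch: "chain P \<theta> N lb \<tau>" and inj: "inj_on \<theta> P"
    and pos: "\<forall>j<N. 0 \<notin># \<tau> j" and surj: "\<forall>x\<in>P. \<exists>j<N. lb j = x"
    and ord: "\<forall>i j. i < N \<longrightarrow> j < N \<longrightarrow> lb i < lb j \<longrightarrow> i < j"
  shows "mvp P \<theta> (content N lb \<tau>)"
proof -
  have ne: "content N lb \<tau> x \<noteq> {#}" if "x \<in> P" for x
  proof -
    have "\<exists>j<N. lb j = x" using surj that by simp
    then obtain j where j: "j < N" "lb j = x" by auto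
    have "\<tau> j \<noteq> {#}" using chain_ne[OF ch j(1)] .
    moreover have "\<tau> j \<subseteq># content N lb \<tau> x" using block_sub_content[OF j(1), of \<tau> lb] j by simp
    ultimately show ?thesis by (metis subset_mset.le_zero_eq)
  qed
  have lt: "klt \<theta> a s b t" if h: "s \<in> P" "t \<in> P" "s < t" "a \<in># content N lb \<tau> s" "b \<in># content N lb \<tau> t" for s t a b
  proof -
    obtain i where i: "i < N" "lb i = s" "a \<in># \<tau> i" using mem_content[OF h(4)] by blast
    obtain j where j: "j < N" "lb j = t" "b \<in># \<tau> j" using mem_content[OF h(5)] by blast
    have "i < j" using ord[rule_format, OF i(1) j(1)] i(2) j(2) h(3) by simp
    then have "klt \<theta> a (lb i) b (lb j)" using chain_sorted[OF ch \<open>i<j\<close> \<open>j<N\<close>] i(3) j(3) by blast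
    then show ?thesis using i(2) j(2) by simp
  qed
  have covk: "klt \<theta> (mmax (content N lb \<tau> s)) s (mmin (content N lb \<tau> t)) t" if cov: "covers P s t" for s t
  proof -
    have st: "s \<in> P" "t \<in> P" "s < t" using cov unfolding covers_def by auto
    have "content N lb \<tau> s \<noteq> {#}" "content N lb \<tau> t \<noteq> {#}" using ne st by auto
    then have "mmax (content N lb \<tau> s) \<in># content N lb \<tau> s" "mmin (content N lb \<tau> t) \<in># content N lb \<tau> t"
      by (auto intro: mmax_in mmin_in)
    then show ?thesis using lt[OF st] by blast
  qed
  show ?thesis
    unfolding mvp_def
  proof (intro conjI ballI allI impI)
    fix p assume "p \<in> P"
    then show "pos_mset (content N lb \<tau> p)" unfolding pos_mset_def using ne[of p] content_pos[OF pos, of lb p] by simp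
  next
    fix x assume "x \<notin> P"
    then show "content N lb \<tau> x = {#}" using content_outside[OF ch] by simp
  next
    fix s t assume cov: "covers P s t" and "\<theta> s < \<theta> t"
    then show "mmax (content N lb \<tau> s) \<le> mmin (content N lb \<tau> t)"
      using covk unfolding klt_def by fastforce
  next
    fix s t assume cov: "covers P s t" and "\<theta> s > \<theta> t"
    then show "mmax (content N lb \<tau> s) < mmin (content N lb \<tau> t)"
      using covk unfolding klt_def by fastforce
  qed
qed

lemma mvp_to_valid:
  fixes P :: "'a::order set"
  assumes fin: "finite P" and inj: "inj_on \<theta> P" and mv: "mvp P \<theta> \<sigma>"
  shows "\<exists>N lb \<tau>. chain P \<theta> N lb \<tau> \<and> content N lb \<tau> = \<sigma> \<and> (\<forall>j\<ge>N. \<tau> j = {#}) \<and>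
     (\<forall>j<N. 0 \<notin># \<tau> j) \<and> (\<forall>x\<in>P. \<exists>j<N. lb j = x) \<and>
     (\<forall>i j. i < N \<longrightarrow> j < N \<longrightarrow> lb i < lb j \<longrightarrow> i < j)"
proof -
  have out: "\<forall>x. x \<notin> P \<longrightarrow> \<sigma> x = {#}" using mvp_out[OF mv] by blast
  obtain N lb \<tau> where ch: "chain P \<theta> N lb \<tau>" and ct: "content N lb \<tau> = \<sigma>" and tz: "\<forall>j\<ge>N. \<tau> j = {#}"
    using chain_exists[OF fin inj out] by blast
  have pos: "\<forall>j<N. 0 \<notin># \<tau> j"
  proof (intro allI impI)
    fix j assume j: "j < N"
    have "lb j \<in> P" using ch j unfolding chain_def by blast
    then have "0 \<notin># \<sigma> (lb j)" using mvp_pos[OF mv] unfolding pos_mset_def by blast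
    moreover have "\<tau> j \<subseteq># \<sigma> (lb j)" using block_sub_content[OF j, of \<tau> lb] ct by simp
    ultimately show "0 \<notin># \<tau> j" by (auto dest: mset_subset_eqD)
  qed
  have surj: "\<forall>x\<in>P. \<exists>j<N. lb j = x"
  proof
    fix x assume x: "x \<in> P"
    then have "\<sigma> x \<noteq> {#}" using mvp_pos[OF mv] unfolding pos_mset_def by blast
    then obtain a where a: "a \<in># content N lb \<tau> x" using ct by auto
    obtain j where "j < N" "lb j = x" "a \<in># \<tau> j" using mem_content[OF a] by blast
    then show "\<exists>j<N. lb j = x" by blast
  qed
  have ord: "\<forall>i j. i < N \<longrightarrow> j < N \<longrightarrow> lb i < lb j \<longrightarrow> i < j"
  proof (intro allI impI)
    fix i j assume i: "i < N" and j: "j < N" and l: "lb i < lb j"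
    show "i < j"
    proof (rule ccontr)
      assume "\<not> i < j"
      moreover have "i \<noteq> j" using l by auto
      ultimately have ji: "j < i" by simp
      have "\<tau> i \<noteq> {#}" "\<tau> j \<noteq> {#}" using ch i j unfolding chain_def by auto
      then obtain a b where a: "a \<in># \<tau> i" and b: "b \<in># \<tau> j" by blast
      have k1: "klt \<theta> b (lb j) a (lb i)" using chain_sorted[OF ch ji i] a b by blast
      have "a \<in># \<sigma> (lb i)" using block_sub_content[OF i, of \<tau> lb] ct a by (auto dest: mset_subset_eqD)
      moreover have "b \<in># \<sigma> (lb j)" using block_sub_content[OF j, of \<tau> lb] ct b by (auto dest: mset_subset_eqD)
      moreover have "lb i \<in> P" "lb j \<in> P" using ch i j unfolding chain_def by auto
      ultimately have k2: "klt \<theta> a (lb i) b (lb j)" using mvp_lt[OF fin inj mv] l by blast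
      show False using klt_asym[OF k1 k2] .
    qed
  qed
  show ?thesis using ch ct tz pos surj ord by blast
qed


lemma psum:
  fixes xs :: "nat list"
  assumes "sorted (xs @ [L])" "j \<le> length xs"
  shows "sum_list (take (Suc j) (map2 (-) (xs @ [L]) (0 # xs))) = (xs @ [L]) ! j"
  using assms(2)
proof (induction j)
  case 0
  then show ?case by (cases xs) auto
next
  case (Suc j)
  let ?c = "map2 (-) (xs @ [L]) (0 # xs)"
  have len: "length ?c = Suc (length xs)" by simp
  have "take (Suc (Suc j)) ?c = take (Suc j) ?c @ [?c ! Suc j]"
    using Suc.prems len by (simp add: take_Suc_conv_app_nth)
  moreover have "?c ! Suc j = (xs @ [L]) ! Suc j - xs ! j"
    using Suc.prems by simp
  moreover have "xs ! j = (xs @ [L]) ! j" using Suc.prems by (simp add: nth_append)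
  moreover have "(xs @ [L]) ! j \<le> (xs @ [L]) ! Suc j"
    using assms(1) Suc.prems by (intro sorted_nth_mono) auto
  ultimately show ?case using Suc.IH Suc.prems by simp
qed

lemma desc_sub: "descents w \<subseteq> {1..<length w}"
  unfolding descents_def by auto

lemma sorted_desc: "sorted (sorted_list_of_set (descents w) @ [length w])"
proof -
  have fin: "finite (descents w)" using desc_sub finite_subset by blast
  show ?thesis using desc_sub[of w] fin by (auto simp: sorted_append less_imp_le)
qed

lemma comp_sum: "sum_list (comp_of_word w) = length w"
proof -
  let ?s = "sorted_list_of_set (descents w)"
  have "sum_list (comp_of_word w) = sum_list (take (Suc (length ?s)) (map2 (-) (?s @ [length w]) (0 # ?s)))"
    unfolding comp_of_word_def Let_def by simp
  also have "\<dots> = (?s @ [length w]) ! (length ?s)" by (rule psum[OF sorted_desc]) simp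
  also have "\<dots> = length w" by (simp only: nth_append_length)
  finally show ?thesis .
qed

lemma comp_Sset: "Sset (comp_of_word w) = descents w"
proof -
  let ?s = "sorted_list_of_set (descents w)"
  let ?c = "map2 (-) (?s @ [length w]) (0 # ?s)"
  have fin: "finite (descents w)" using desc_sub finite_subset by blast
  have c: "comp_of_word w = ?c" unfolding comp_of_word_def Let_def by simp
  have "Sset ?c = {sum_list (take j ?c) | j. 1 \<le> j \<and> j < Suc (length ?s)}" unfolding Sset_def by simp
  also have "\<dots> = {(?s @ [length w]) ! i | i. i < length ?s}"
  proof (intro equalityI subsetI)
    fix x assume "x \<in> {sum_list (take j ?c) | j. 1 \<le> j \<and> j < Suc (length ?s)}"
    then obtain j where j: "1 \<le> j" "j < Suc (length ?s)" "x = sum_list (take j ?c)" by blast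
    then obtain i where i: "j = Suc i" by (cases j) auto
    have "x = (?s @ [length w]) ! i" using j i psum[OF sorted_desc, of i] by simp
    then show "x \<in> {(?s @ [length w]) ! i | i. i < length ?s}" using j i by auto
  next
    fix x assume "x \<in> {(?s @ [length w]) ! i | i. i < length ?s}"
    then obtain i where i: "i < length ?s" "x = (?s @ [length w]) ! i" by blast
    have "x = sum_list (take (Suc i) ?c)" using i psum[OF sorted_desc, of i] by simp
    moreover have "1 \<le> Suc i \<and> Suc i < Suc (length ?s)" using i by simp
    ultimately show "x \<in> {sum_list (take j ?c) | j. 1 \<le> j \<and> j < Suc (length ?s)}" by blast
  qed
  also have "\<dots> = {?s ! i | i. i < length ?s}"
    by (intro Collect_cong ex_cong1) (auto simp: nth_append)
  also have "\<dots> = set ?s" by (simp add: set_conv_nth)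
  also have "\<dots> = descents w" using fin by simp
  finally show ?thesis using c by simp
qed


definition lab :: "'a set \<Rightarrow> ('a \<Rightarrow> nat set) \<Rightarrow> nat \<Rightarrow> 'a" where
  "lab P e j = (THE x. x \<in> P \<and> Suc j \<in> e x)"

lemma lab_props:
  assumes "lin_multi_ext P N e" "j < N"
  shows "lab P e j \<in> P \<and> Suc j \<in> e (lab P e j)"
proof -
  have "\<exists>!x. x \<in> P \<and> Suc j \<in> e x" using assms unfolding lin_multi_ext_def by auto
  then show ?thesis unfolding lab_def by (rule theI')
qed

lemma lab_eq:
  assumes "lin_multi_ext P N e" "x \<in> P" "Suc j \<in> e x"
  shows "lab P e j = x"
proof -
  have "e x \<subseteq> {1..N}" using assms unfolding lin_multi_ext_def by blast
  then have "Suc j \<in> {1..N}" using assms(3) by blast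
  then have "\<exists>!x. x \<in> P \<and> Suc j \<in> e x" using assms unfolding lin_multi_ext_def by blast
  moreover have "x \<in> P \<and> Suc j \<in> e x" using assms(2,3) by simp
  ultimately show ?thesis unfolding lab_def by (rule the1_equality)
qed

lemma lme_sub: "lin_multi_ext P N e \<Longrightarrow> x \<in> P \<Longrightarrow> e x \<subseteq> {1..N}"
  unfolding lin_multi_ext_def by blast

lemma lme_ne: "lin_multi_ext P N e \<Longrightarrow> x \<in> P \<Longrightarrow> e x \<noteq> {}"
  unfolding lin_multi_ext_def by blast

lemma lme_out: "lin_multi_ext P N e \<Longrightarrow> x \<notin> P \<Longrightarrow> e x = {}"
  unfolding lin_multi_ext_def by blast

lemma lme_ord: "lin_multi_ext P N e \<Longrightarrow> x \<in> P \<Longrightarrow> y \<in> P \<Longrightarrow> x < y \<Longrightarrow> Max (e x) < Min (e y)"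
  unfolding lin_multi_ext_def by blast

lemma lme_cons: "lin_multi_ext P N e \<Longrightarrow> x \<in> P \<Longrightarrow> i \<in> e x \<Longrightarrow> Suc i \<in> e x \<Longrightarrow> False"
  unfolding lin_multi_ext_def by blast

lemma lme_surj:
  assumes "lin_multi_ext P N e" "x \<in> P"
  shows "\<exists>j<N. lab P e j = x"
proof -
  obtain i where i: "i \<in> e x" using lme_ne[OF assms] by blast
  have "i \<in> {1..N}" using lme_sub[OF assms] i by blast
  then obtain j where j: "i = Suc j" "j < N" by (cases i) auto
  have "lab P e j = x" using lab_eq[OF assms(1,2)] i j by simp
  then show ?thesis using j by blast
qed

lemma lme_card:
  assumes "lin_multi_ext P N e" "finite P"
  shows "card P \<le> N"
proof -
  have "P \<subseteq> lab P e ` {..<N}"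
  proof
    fix x assume "x \<in> P"
    then obtain j where "j < N" "lab P e j = x" using lme_surj[OF assms(1)] by blast
    then show "x \<in> lab P e ` {..<N}" by force
  qed
  then have "card P \<le> card (lab P e ` {..<N})" by (rule card_mono[rotated]) simp
  also have "\<dots> \<le> card {..<N}" by (rule card_image_le) simp
  finally show ?thesis by simp
qed

lemma ext_word_len: "length (ext_word P \<theta> N e) = N"
  unfolding ext_word_def by simp

lemma ext_word_nth: "j < N \<Longrightarrow> ext_word P \<theta> N e ! j = \<theta> (lab P e j)"
  unfolding ext_word_def lab_def by (simp del: upt_Suc)

lemma e_determined:
  assumes "lin_multi_ext P N e"
  shows "e = (\<lambda>x. if x \<in> P then {i. 1 \<le> i \<and> i \<le> N \<and> lab P e (i - 1) = x} else {})"
proof (rule ext)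
  fix x
  show "e x = (if x \<in> P then {i. 1 \<le> i \<and> i \<le> N \<and> lab P e (i - 1) = x} else {})"
  proof (cases "x \<in> P")
    case True
    have "i \<in> e x \<longleftrightarrow> 1 \<le> i \<and> i \<le> N \<and> lab P e (i - 1) = x" for i
    proof
      assume i: "i \<in> e x"
      then have "i \<in> {1..N}" using lme_sub[OF assms True] by blast
      moreover have "lab P e (i - 1) = x" using lab_eq[OF assms True] i \<open>i \<in> {1..N}\<close> by simp
      ultimately show "1 \<le> i \<and> i \<le> N \<and> lab P e (i - 1) = x" by simp
    next
      assume i: "1 \<le> i \<and> i \<le> N \<and> lab P e (i - 1) = x"
      then have "i - 1 < N" by auto
      then have "Suc (i - 1) \<in> e (lab P e (i - 1))" using lab_props[OF assms] by blast
      moreover have "Suc (i - 1) = i" using i by auto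
      ultimately show "i \<in> e x" using i by simp
    qed
    then show ?thesis using True by auto
  next
    case False
    then show ?thesis using lme_out[OF assms] by simp
  qed
qed

lemma content_cong:
  "(\<And>j. j < N \<Longrightarrow> l1 j = l2 j) \<Longrightarrow> (\<And>j. j < N \<Longrightarrow> t1 j = t2 j) \<Longrightarrow> content N l1 t1 = content N l2 t2"
  unfolding content_def by (intro ext sum.cong) auto

lemma sum_content:
  assumes "finite P" "\<And>j. j < N \<Longrightarrow> lb j \<in> P"
  shows "(\<Sum>x\<in>P. content N lb \<tau> x) = (\<Sum>j<N. \<tau> j)"
proof -
  have "(\<Sum>x\<in>P. content N lb \<tau> x) = (\<Sum>j<N. \<Sum>x\<in>P. if lb j = x then \<tau> j else {#})"
    unfolding content_def by (rule sum.swap)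
  also have "\<dots> = (\<Sum>j<N. \<tau> j)"
    using assms by (intro sum.cong) (auto simp: sum.delta)
  finally show ?thesis .
qed

lemma size_sum_lt: "size (\<Sum>j<(N::nat). (\<tau> j :: 'a multiset)) = (\<Sum>j<N. size (\<tau> j))"
  by (induction N) auto

lemma size_bound:
  fixes N :: nat and \<tau> :: "nat \<Rightarrow> 'a multiset"
  assumes "\<forall>j<N. \<tau> j \<noteq> {#}"
  shows "N \<le> size (\<Sum>j<N. \<tau> j)"
proof -
  have "(\<Sum>j<N. (1::nat)) \<le> (\<Sum>j<N. size (\<tau> j))"
    using assms by (intro sum_mono) (simp add: Suc_le_eq nonempty_has_size)
  then show ?thesis by (simp add: size_sum_lt)
qed

lemma finite_submsets: "finite {M. M \<subseteq># (\<mu>::nat multiset)}"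
proof -
  have "{M. M \<subseteq># \<mu>} \<subseteq> mset ` {xs. set xs \<subseteq> set_mset \<mu> \<and> length xs \<le> size \<mu>}"
  proof
    fix M assume M: "M \<in> {M. M \<subseteq># \<mu>}"
    obtain xs where xs: "mset xs = M" using ex_mset by blast
    have "set xs \<subseteq> set_mset \<mu>" using M xs by (auto dest: mset_subset_eqD)
    moreover have "length xs \<le> size \<mu>" using M xs size_mset_mono by fastforce
    ultimately show "M \<in> mset ` {xs. set xs \<subseteq> set_mset \<mu> \<and> length xs \<le> size \<mu>}" using xs by blast
  qed
  moreover have "finite (mset ` {xs. set xs \<subseteq> set_mset \<mu> \<and> length xs \<le> size \<mu>})"
    by (intro finite_imageI finite_lists_length_le) simp
  ultimately show ?thesis by (rule finite_subset)
qed

lemma block_le_sum: "j < (N::nat) \<Longrightarrow> (\<tau> j :: 'a multiset) \<subseteq># (\<Sum>i<N. \<tau> i)"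
proof -
  assume j: "j < N"
  have "(\<Sum>i<N. \<tau> i) = \<tau> j + (\<Sum>i\<in>{..<N} - {j}. \<tau> i)"
    using j by (subst sum.remove[of _ j]) auto
  then show ?thesis by simp
qed


definition Sfun :: "'a set \<Rightarrow> ('a \<Rightarrow> nat) \<Rightarrow> nat \<Rightarrow> ('a \<Rightarrow> nat set) \<Rightarrow> nat multiset \<Rightarrow> (nat \<Rightarrow> nat multiset) set" where
  "Sfun P \<theta> N e \<mu> = {\<tau>. (\<forall>j. j \<ge> N \<longrightarrow> \<tau> j = {#}) \<and> (\<forall>j<N. pos_mset (\<tau> j)) \<and>
     (\<forall>j. Suc j < N \<longrightarrow> mmax (\<tau> j) \<le> mmin (\<tau> (Suc j)) \<and>
        (\<theta> (lab P e (Suc j)) < \<theta> (lab P e j) \<longrightarrow> mmax (\<tau> j) < mmin (\<tau> (Suc j)))) \<and>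
     (\<Sum>j<N. \<tau> j) = \<mu>}"

lemma Lhat_eq:
  shows "Lhat (comp_of_word (ext_word P \<theta> N e)) \<mu> = real (card (Sfun P \<theta> N e \<mu>))"
proof -
  let ?w = "ext_word P \<theta> N e"
  have d: "Suc j \<in> descents ?w \<longleftrightarrow> \<theta> (lab P e (Suc j)) < \<theta> (lab P e j)" if "Suc j < N" for j
    using that unfolding descents_def by (simp add: ext_word_len ext_word_nth)
  have "{\<sigma> :: nat \<Rightarrow> nat multiset.
      (\<forall>j. j \<ge> sum_list (comp_of_word ?w) \<longrightarrow> \<sigma> j = {#}) \<and>
      (\<forall>j < sum_list (comp_of_word ?w). pos_mset (\<sigma> j)) \<and>
      (\<forall>j. Suc j < sum_list (comp_of_word ?w) \<longrightarrow>
          mmax (\<sigma> j) \<le> mmin (\<sigma> (Suc j)) \<and>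
          (Suc j \<in> Sset (comp_of_word ?w) \<longrightarrow> mmax (\<sigma> j) < mmin (\<sigma> (Suc j)))) \<and>
      (\<Sum>j < sum_list (comp_of_word ?w). \<sigma> j) = \<mu>} = Sfun P \<theta> N e \<mu>"
    unfolding Sfun_def comp_sum comp_Sset ext_word_len
    by (intro Collect_cong conj_cong refl all_cong imp_cong) (use d in auto)
  then show ?thesis unfolding Lhat_def by simp
qed


lemma Sfun_D:
  assumes "\<tau> \<in> Sfun P \<theta> N e \<mu>"
  shows "\<forall>j. j \<ge> N \<longrightarrow> \<tau> j = {#}" "\<forall>j<N. pos_mset (\<tau> j)"
    "\<forall>j. Suc j < N \<longrightarrow> mmax (\<tau> j) \<le> mmin (\<tau> (Suc j))"
    "\<forall>j. Suc j < N \<longrightarrow> \<theta> (lab P e (Suc j)) < \<theta> (lab P e j) \<longrightarrow> mmax (\<tau> j) < mmin (\<tau> (Suc j))"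
    "(\<Sum>j<N. \<tau> j) = \<mu>"
  using assms unfolding Sfun_def by blast+

lemma T_to_valid:
  fixes P :: "'a::order set"
  assumes inj: "inj_on \<theta> P" and lme: "lin_multi_ext P N e" and tS: "\<tau> \<in> Sfun P \<theta> N e \<mu>"
  shows "chain P \<theta> N (lab P e) \<tau> \<and> (\<forall>j<N. 0 \<notin># \<tau> j) \<and> (\<forall>x\<in>P. \<exists>j<N. lab P e j = x) \<and>
    (\<forall>i j. i < N \<longrightarrow> j < N \<longrightarrow> lab P e i < lab P e j \<longrightarrow> i < j)"
proof -
  note S = Sfun_D[OF tS]
  have lP: "lab P e j \<in> P" "Suc j \<in> e (lab P e j)" if "j < N" for j using lab_props[OF lme that] by auto
  have neq: "lab P e j \<noteq> lab P e (Suc j)" if j: "Suc j < N" for j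
  proof
    assume eq: "lab P e j = lab P e (Suc j)"
    have "Suc j \<in> e (lab P e j)" using lP j by simp
    moreover have "Suc (Suc j) \<in> e (lab P e j)" using lP[of "Suc j"] j eq by simp
    ultimately show False using lme_cons[OF lme lP(1)] j by (meson Suc_lessD)
  qed
  have ch: "chain P \<theta> N (lab P e) \<tau>"
    unfolding chain_def
  proof (intro conjI allI impI ballI)
    fix j assume j: "j < N"
    show "lab P e j \<in> P" using lP j by simp
    show "\<tau> j \<noteq> {#}" using S(2) j unfolding pos_mset_def by blast
  next
    fix j assume j: "Suc j < N"
    show "lab P e j \<noteq> lab P e (Suc j)" using neq[OF j] .
    fix a b assume a: "a \<in># \<tau> j" and b: "b \<in># \<tau> (Suc j)"
    have ab: "a \<le> b" using mmax_ge[OF a] mmin_le[OF b] S(3) j by (meson order.trans)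
    show "klt \<theta> a (lab P e j) b (lab P e (Suc j))"
    proof (cases "a = b")
      case True
      then have "mmax (\<tau> j) = mmin (\<tau> (Suc j))" using mmax_ge[OF a] mmin_le[OF b] S(3) j by (meson order.antisym order.trans)
      then have "\<not> \<theta> (lab P e (Suc j)) < \<theta> (lab P e j)" using S(4) j by auto
      moreover have "\<theta> (lab P e j) \<noteq> \<theta> (lab P e (Suc j))"
        using inj neq[OF j] lP(1)[of j] lP(1)[of "Suc j"] j by (metis Suc_lessD inj_on_eq_iff)
      ultimately show ?thesis unfolding klt_def using True by simp
    next
      case False
      then show ?thesis using ab unfolding klt_def by simp
    qed
  qed
  have pos: "\<forall>j<N. 0 \<notin># \<tau> j" using S(2) unfolding pos_mset_def by blast
  have surj: "\<forall>x\<in>P. \<exists>j<N. lab P e j = x" using lme_surj[OF lme] by blast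
  have ord: "\<forall>i j. i < N \<longrightarrow> j < N \<longrightarrow> lab P e i < lab P e j \<longrightarrow> i < j"
  proof (intro allI impI)
    fix i j assume i: "i < N" and j: "j < N" and lt: "lab P e i < lab P e j"
    have m: "Max (e (lab P e i)) < Min (e (lab P e j))" using lme_ord[OF lme lP(1)[OF i] lP(1)[OF j] lt] .
    have fi: "finite (e (lab P e i))" using lme_sub[OF lme lP(1)[OF i]] finite_subset by blast
    have fj: "finite (e (lab P e j))" using lme_sub[OF lme lP(1)[OF j]] finite_subset by blast
    have "Suc i \<le> Max (e (lab P e i))" using Max_ge[OF fi lP(2)[OF i]] .
    moreover have "Min (e (lab P e j)) \<le> Suc j" using Min_le[OF fj lP(2)[OF j]] .
    ultimately show "i < j" using m by linarith
  qed
  show ?thesis using ch pos surj ord by blast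
qed


lemma valid_to_T:
  fixes P :: "'a::order set"
  assumes fin: "finite P" and inj: "inj_on \<theta> P"
    and ch: "chain P \<theta> N lb \<tau>" and tz: "\<forall>j\<ge>N. \<tau> j = {#}"
    and pos: "\<forall>j<N. 0 \<notin># \<tau> j" and surj: "\<forall>x\<in>P. \<exists>j<N. lb j = x"
    and ord: "\<forall>i j. i < N \<longrightarrow> j < N \<longrightarrow> lb i < lb j \<longrightarrow> i < j"
  defines "e \<equiv> (\<lambda>x. if x \<in> P then {i. 1 \<le> i \<and> i \<le> N \<and> lb (i - 1) = x} else {})"
  shows "lin_multi_ext P N e \<and> (\<forall>j<N. lab P e j = lb j) \<and> \<tau> \<in> Sfun P \<theta> N e (\<Sum>j<N. \<tau> j)"
proof -
  have sub: "e x \<subseteq> {1..N}" for x unfolding e_def by auto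
  have fe: "finite (e x)" for x using sub finite_subset by blast
  have mem: "i \<in> e x \<longleftrightarrow> x \<in> P \<and> 1 \<le> i \<and> i \<le> N \<and> lb (i - 1) = x" for i x unfolding e_def by auto
  have lbP: "lb j \<in> P" if "j < N" for j using chain_lbP[OF ch that] .
  have inE: "Suc j \<in> e (lb j)" if "j < N" for j using mem lbP that by simp
  have lme: "lin_multi_ext P N e"
    unfolding lin_multi_ext_def
  proof (intro conjI ballI allI impI)
    fix x assume x: "x \<in> P"
    have "\<exists>j<N. lb j = x" using surj x by simp
    then obtain j where "j < N" "lb j = x" by auto
    then show "e x \<noteq> {}" using inE by blast
    show "e x \<subseteq> {1..N}" using sub .
  next
    fix x assume "x \<notin> P" then show "e x = {}" unfolding e_def by simp
  next
    fix x y assume x: "x \<in> P" and y: "y \<in> P" and xy: "x < y"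
    have nx: "e x \<noteq> {}" and ny: "e y \<noteq> {}"
    proof -
      have "\<exists>j<N. lb j = x" using surj x by simp
      then obtain j where "j < N" "lb j = x" by auto
      then show "e x \<noteq> {}" using inE by blast
      have "\<exists>j<N. lb j = y" using surj y by simp
      then obtain k where "k < N" "lb k = y" by auto
      then show "e y \<noteq> {}" using inE by blast
    qed
    have "Max (e x) \<in> e x" using Max_in[OF fe nx] .
    then have a: "1 \<le> Max (e x)" "Max (e x) \<le> N" "lb (Max (e x) - 1) = x" using mem by auto
    have "Min (e y) \<in> e y" using Min_in[OF fe ny] .
    then have b: "1 \<le> Min (e y)" "Min (e y) \<le> N" "lb (Min (e y) - 1) = y" using mem by auto
    have "Max (e x) - 1 < Min (e y) - 1"
      using ord[rule_format, of "Max (e x) - 1" "Min (e y) - 1"] a b xy by auto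
    then show "Max (e x) < Min (e y)" using a b by linarith
  next
    fix i assume i: "i \<in> {1..N}"
    then have "i - 1 < N" by auto
    then have "lb (i - 1) \<in> P" using lbP by blast
    then show "\<exists>!x. x \<in> P \<and> i \<in> e x" using i mem by auto
  next
    fix x i assume x: "x \<in> P"
    show "\<not> (i \<in> e x \<and> Suc i \<in> e x)"
    proof
      assume h: "i \<in> e x \<and> Suc i \<in> e x"
      then have "1 \<le> i" "Suc i \<le> N" "lb (i - 1) = x" "lb i = x" using mem by auto
      moreover have "Suc (i - 1) < N" using calculation by auto
      ultimately show False using chain_neq[OF ch, of "i - 1"] by simp
    qed
  qed
  have labeq: "\<forall>j<N. lab P e j = lb j"
  proof (intro allI impI)
    fix j assume j: "j < N"
    show "lab P e j = lb j" using lab_eq[OF lme lbP[OF j] inE[OF j]] .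
  qed
  have "\<tau> \<in> Sfun P \<theta> N e (\<Sum>j<N. \<tau> j)"
    unfolding Sfun_def
  proof (intro CollectI conjI allI impI)
    fix j assume "N \<le> j" then show "\<tau> j = {#}" using tz by simp
  next
    fix j assume j: "j < N"
    show "pos_mset (\<tau> j)" unfolding pos_mset_def using chain_ne[OF ch j] pos j by simp
  next
    fix j assume j: "Suc j < N"
    have ne1: "\<tau> j \<noteq> {#}" using chain_ne[OF ch] j by simp
    have ne2: "\<tau> (Suc j) \<noteq> {#}" using chain_ne[OF ch j] .
    have k: "klt \<theta> (mmax (\<tau> j)) (lb j) (mmin (\<tau> (Suc j))) (lb (Suc j))"
    proof -
      have "\<forall>a\<in>#\<tau> j. \<forall>b\<in>#\<tau> (Suc j). klt \<theta> a (lb j) b (lb (Suc j))"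
        using chain_sorted[OF ch _ j, of j] by simp
      then show ?thesis using mmax_in[OF ne1] mmin_in[OF ne2] by blast
    qed
    have l: "lab P e j = lb j" "lab P e (Suc j) = lb (Suc j)" using labeq j by auto
    show "mmax (\<tau> j) \<le> mmin (\<tau> (Suc j))" using k unfolding klt_def by auto
    assume "\<theta> (lab P e (Suc j)) < \<theta> (lab P e j)"
    then show "mmax (\<tau> j) < mmin (\<tau> (Suc j))" using k l unfolding klt_def by auto
  qed simp
  then show ?thesis using lme labeq by blast
qed


theorem mainTheorem4:
  fixes P :: "'a::order set" and \<theta> :: "'a \<Rightarrow> nat" and n :: nat
  assumes "finite P" and "card P = n" and "bij_betw \<theta> P {1..n}"
  shows "Khat P \<theta> =
    (\<lambda>\<mu>. \<Sum>N. if n \<le> N then (\<Sum>w\<in>Jtilde P \<theta> N. Lhat (comp_of_word w) \<mu>) else 0)"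
proof (rule ext)
  fix \<mu> :: "nat multiset"
  have fin: "finite P" using assms(1) .
  have inj: "inj_on \<theta> P" using assms(3) by (rule bij_betw_imp_inj_on)
  define E where "E N = {e. lin_multi_ext P N e}" for N
  define S where "S N e = Sfun P \<theta> N e \<mu>" for N e
  define f where "f = (\<lambda>N. if n \<le> N then (\<Sum>w\<in>Jtilde P \<theta> N. Lhat (comp_of_word w) \<mu>) else 0)"
  have Jt: "Jtilde P \<theta> N = ext_word P \<theta> N ` E N" for N
    unfolding Jtilde_def E_def by blast
  have injw: "inj_on (ext_word P \<theta> N) (E N)" for N
  proof (rule inj_onI)
    fix e1 e2 assume e1: "e1 \<in> E N" and e2: "e2 \<in> E N" and eq: "ext_word P \<theta> N e1 = ext_word P \<theta> N e2"
    have l1: "lin_multi_ext P N e1" and l2: "lin_multi_ext P N e2" using e1 e2 unfolding E_def by auto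
    have lab: "lab P e1 j = lab P e2 j" if j: "j < N" for j
    proof -
      have "\<theta> (lab P e1 j) = \<theta> (lab P e2 j)" using arg_cong[OF eq, of "\<lambda>w. w ! j"] j by (simp add: ext_word_nth)
      moreover have "lab P e1 j \<in> P" "lab P e2 j \<in> P" using lab_props[OF l1 j] lab_props[OF l2 j] by auto
      ultimately show ?thesis using inj by (simp add: inj_on_eq_iff)
    qed
    have "(\<lambda>x. if x \<in> P then {i. 1 \<le> i \<and> i \<le> N \<and> lab P e1 (i - 1) = x} else {}) =
          (\<lambda>x. if x \<in> P then {i. 1 \<le> i \<and> i \<le> N \<and> lab P e2 (i - 1) = x} else {})"
    proof (intro ext)
      fix x
      have "{i. 1 \<le> i \<and> i \<le> N \<and> lab P e1 (i - 1) = x} = {i. 1 \<le> i \<and> i \<le> N \<and> lab P e2 (i - 1) = x}"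
      proof (intro Collect_cong)
        fix i show "(1 \<le> i \<and> i \<le> N \<and> lab P e1 (i - 1) = x) = (1 \<le> i \<and> i \<le> N \<and> lab P e2 (i - 1) = x)"
          using lab[of "i - 1"] by auto
      qed
      then show "(if x \<in> P then {i. 1 \<le> i \<and> i \<le> N \<and> lab P e1 (i - 1) = x} else {}) =
          (if x \<in> P then {i. 1 \<le> i \<and> i \<le> N \<and> lab P e2 (i - 1) = x} else {})" by simp
    qed
    then show "e1 = e2" using e_determined[OF l1] e_determined[OF l2] by simp
  qed
  have Eempty: "E N = {}" if "N < n" for N
    using lme_card[OF _ fin] that assms(2) unfolding E_def by fastforce
  have f_eq: "f N = real (\<Sum>e\<in>E N. card (S N e))" for N
  proof (cases "n \<le> N")
    case True
    have "f N = (\<Sum>w\<in>ext_word P \<theta> N ` E N. Lhat (comp_of_word w) \<mu>)" unfolding f_def Jt using True by simp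
    also have "\<dots> = (\<Sum>e\<in>E N. Lhat (comp_of_word (ext_word P \<theta> N e)) \<mu>)"
      by (rule sum.reindex[OF injw, unfolded comp_def])
    also have "\<dots> = (\<Sum>e\<in>E N. real (card (S N e)))" unfolding S_def Lhat_eq by simp
    finally show ?thesis by simp
  next
    case False
    then show ?thesis unfolding f_def using Eempty[of N] by simp
  qed
  have Sempty: "S N e = {}" if "size \<mu> < N" for N e
  proof (rule ccontr)
    assume "S N e \<noteq> {}"
    then obtain \<tau> where t: "\<tau> \<in> Sfun P \<theta> N e \<mu>" unfolding S_def by blast
    note D = Sfun_D[OF t]
    have "\<forall>j<N. \<tau> j \<noteq> {#}" using D(2) unfolding pos_mset_def by blast
    then have "N \<le> size (\<Sum>j<N. \<tau> j)" by (rule size_bound)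
    then show False using D(5) that by simp
  qed
  have f_zero: "f N = 0" if "N \<notin> {..size \<mu>}" for N
    unfolding f_eq using Sempty[of N] that by simp
  have finE: "finite (E N)" for N
  proof -
    have "E N \<subseteq> {e. \<forall>x. (x \<in> P \<longrightarrow> e x \<in> Pow {1..N}) \<and> (x \<notin> P \<longrightarrow> e x = {})}"
      unfolding E_def using lme_sub lme_out by blast
    moreover have "finite {e. \<forall>x. (x \<in> P \<longrightarrow> e x \<in> Pow {1..N}) \<and> (x \<notin> P \<longrightarrow> e x = ({}::nat set))}"
      by (rule finite_set_of_finite_funs[OF fin]) simp
    ultimately show ?thesis by (rule finite_subset)
  qed
  have finS: "finite (S N e)" for N e
  proof -
    have "S N e \<subseteq> {\<tau>. \<forall>j. (j \<in> {..<N} \<longrightarrow> \<tau> j \<in> {M. M \<subseteq># \<mu>}) \<and> (j \<notin> {..<N} \<longrightarrow> \<tau> j = {#})}"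
    proof
      fix \<tau> assume t: "\<tau> \<in> S N e"
      note D = Sfun_D[OF t[unfolded S_def]]
      show "\<tau> \<in> {\<tau>. \<forall>j. (j \<in> {..<N} \<longrightarrow> \<tau> j \<in> {M. M \<subseteq># \<mu>}) \<and> (j \<notin> {..<N} \<longrightarrow> \<tau> j = {#})}"
        using D(1) block_le_sum[of _ N \<tau>] D(5) by auto
    qed
    moreover have "finite {\<tau>. \<forall>j. (j \<in> {..<N} \<longrightarrow> \<tau> j \<in> {M. M \<subseteq># \<mu>}) \<and> (j \<notin> {..<N} \<longrightarrow> \<tau> j = {#})}"
      by (rule finite_set_of_finite_funs) (simp_all add: finite_submsets)
    ultimately show ?thesis by (rule finite_subset)
  qed
  define T where "T = Sigma {..size \<mu>} (\<lambda>N. Sigma (E N) (S N))"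
  define A where "A = {\<sigma>. mvp P \<theta> \<sigma> \<and> (\<Sum>p\<in>P. \<sigma> p) = \<mu>}"
  define F where "F = (\<lambda>(N, e, \<tau>). content N (lab P e) \<tau>)"
  have cardT: "card T = (\<Sum>N\<le>size \<mu>. \<Sum>e\<in>E N. card (S N e))"
    unfolding T_def using finE finS by (simp add: finite_SigmaI)
  have injF: "inj_on F T"
  proof (rule inj_onI)
    fix t1 t2 assume t1: "t1 \<in> T" and t2: "t2 \<in> T" and eq: "F t1 = F t2"
    obtain N1 e1 \<tau>1 where t1e: "t1 = (N1, e1, \<tau>1)" by (cases t1) auto
    obtain N2 e2 \<tau>2 where t2e: "t2 = (N2, e2, \<tau>2)" by (cases t2) auto
    have l1: "lin_multi_ext P N1 e1" and s1: "\<tau>1 \<in> Sfun P \<theta> N1 e1 \<mu>"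
      using t1 unfolding t1e T_def E_def S_def by auto
    have l2: "lin_multi_ext P N2 e2" and s2: "\<tau>2 \<in> Sfun P \<theta> N2 e2 \<mu>"
      using t2 unfolding t2e T_def E_def S_def by auto
    have c1: "chain P \<theta> N1 (lab P e1) \<tau>1" using T_to_valid[OF inj l1 s1] by blast
    have c2: "chain P \<theta> N2 (lab P e2) \<tau>2" using T_to_valid[OF inj l2 s2] by blast
    have "content N1 (lab P e1) \<tau>1 = content N2 (lab P e2) \<tau>2" using eq unfolding F_def t1e t2e by simp
    then have u: "N1 = N2 \<and> (\<forall>j<N1. lab P e1 j = lab P e2 j \<and> \<tau>1 j = \<tau>2 j)"
      using chain_unique[OF c1 c2] by blast
    have "\<tau>1 = \<tau>2"
    proof (rule ext)
      fix j show "\<tau>1 j = \<tau>2 j"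
        using u Sfun_D(1)[OF s1] Sfun_D(1)[OF s2] by (cases "j < N1") auto
    qed
    moreover have "e1 = e2"
    proof -
      have "(\<lambda>x. if x \<in> P then {i. 1 \<le> i \<and> i \<le> N1 \<and> lab P e1 (i - 1) = x} else {}) =
            (\<lambda>x. if x \<in> P then {i. 1 \<le> i \<and> i \<le> N2 \<and> lab P e2 (i - 1) = x} else {})"
      proof (intro ext)
        fix x
        have "{i. 1 \<le> i \<and> i \<le> N1 \<and> lab P e1 (i - 1) = x} = {i. 1 \<le> i \<and> i \<le> N2 \<and> lab P e2 (i - 1) = x}"
        proof (intro Collect_cong)
          fix i show "(1 \<le> i \<and> i \<le> N1 \<and> lab P e1 (i - 1) = x) = (1 \<le> i \<and> i \<le> N2 \<and> lab P e2 (i - 1) = x)"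
            using u by (cases "1 \<le> i \<and> i \<le> N1") auto
        qed
        then show "(if x \<in> P then {i. 1 \<le> i \<and> i \<le> N1 \<and> lab P e1 (i - 1) = x} else {}) =
            (if x \<in> P then {i. 1 \<le> i \<and> i \<le> N2 \<and> lab P e2 (i - 1) = x} else {})" by simp
      qed
      then show ?thesis using e_determined[OF l1] e_determined[OF l2] by simp
    qed
    ultimately show "t1 = t2" using u t1e t2e by simp
  qed
  have imgF: "F ` T = A"
  proof (intro equalityI subsetI)
    fix \<sigma> assume "\<sigma> \<in> F ` T"
    then obtain N e \<tau> where t: "(N, e, \<tau>) \<in> T" and sg: "\<sigma> = content N (lab P e) \<tau>"
      unfolding F_def by auto
    have l: "lin_multi_ext P N e" and s: "\<tau> \<in> Sfun P \<theta> N e \<mu>"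
      using t unfolding T_def E_def S_def by auto
    have V: "chain P \<theta> N (lab P e) \<tau> \<and> (\<forall>j<N. 0 \<notin># \<tau> j) \<and> (\<forall>x\<in>P. \<exists>j<N. lab P e j = x) \<and>
      (\<forall>i j. i < N \<longrightarrow> j < N \<longrightarrow> lab P e i < lab P e j \<longrightarrow> i < j)" using T_to_valid[OF inj l s] .
    have "mvp P \<theta> \<sigma>" unfolding sg using valid_to_mvp[of P \<theta> N "lab P e" \<tau>] V inj by blast
    moreover have "(\<Sum>p\<in>P. \<sigma> p) = \<mu>"
    proof -
      have "(\<Sum>p\<in>P. \<sigma> p) = (\<Sum>j<N. \<tau> j)" unfolding sg
        by (rule sum_content[OF fin]) (use V chain_lbP in blast)
      then show ?thesis using Sfun_D(5)[OF s] by simp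
    qed
    ultimately show "\<sigma> \<in> A" unfolding A_def by blast
  next
    fix \<sigma> assume "\<sigma> \<in> A"
    then have mv: "mvp P \<theta> \<sigma>" and sm: "(\<Sum>p\<in>P. \<sigma> p) = \<mu>" unfolding A_def by auto
    obtain N lb \<tau> where ch: "chain P \<theta> N lb \<tau>" and ct: "content N lb \<tau> = \<sigma>" and tz: "\<forall>j\<ge>N. \<tau> j = {#}"
      and pos: "\<forall>j<N. 0 \<notin># \<tau> j" and surj: "\<forall>x\<in>P. \<exists>j<N. lb j = x"
      and ord: "\<forall>i j. i < N \<longrightarrow> j < N \<longrightarrow> lb i < lb j \<longrightarrow> i < j"
      using mvp_to_valid[OF fin inj mv] by blast
    define e where "e = (\<lambda>x. if x \<in> P then {i. 1 \<le> i \<and> i \<le> N \<and> lb (i - 1) = x} else {})"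
    have R: "lin_multi_ext P N e \<and> (\<forall>j<N. lab P e j = lb j) \<and> \<tau> \<in> Sfun P \<theta> N e (\<Sum>j<N. \<tau> j)"
      unfolding e_def by (rule valid_to_T[OF fin inj ch tz pos surj ord])
    have sumeq: "(\<Sum>j<N. \<tau> j) = \<mu>"
    proof -
      have "(\<Sum>x\<in>P. content N lb \<tau> x) = (\<Sum>j<N. \<tau> j)"
        by (rule sum_content[OF fin]) (use ch in \<open>simp add: chain_lbP\<close>)
      then show ?thesis using sm ct by simp
    qed
    have Nle: "N \<le> size \<mu>"
    proof -
      have "\<forall>j<N. \<tau> j \<noteq> {#}" using chain_ne[OF ch] by blast
      then have "N \<le> size (\<Sum>j<N. \<tau> j)" by (rule size_bound)
      then show ?thesis using sumeq by simp
    qed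
    have inT: "(N, e, \<tau>) \<in> T" unfolding T_def E_def S_def using R sumeq Nle by auto
    have "F (N, e, \<tau>) = content N (lab P e) \<tau>" unfolding F_def by simp
    also have "\<dots> = content N lb \<tau>" by (rule content_cong) (use R in auto)
    also have "\<dots> = \<sigma>" using ct .
    finally show "\<sigma> \<in> F ` T" using inT by (metis image_eqI)
  qed
  have "card A = card T" using card_image[OF injF] imgF by simp
  have "suminf f = (\<Sum>N\<in>{..size \<mu>}. f N)" by (rule suminf_finite) (auto intro: f_zero)
  also have "\<dots> = real (\<Sum>N\<le>size \<mu>. \<Sum>e\<in>E N. card (S N e))" unfolding f_eq by simp
  also have "\<dots> = real (card A)" using cardT \<open>card A = card T\<close> by simp
  finally have "suminf f = real (card A)" .
  then show "Khat P \<theta> \<mu> = (\<Sum>N. if n \<le> N then (\<Sum>w\<in>Jtilde P \<theta> N. Lhat (comp_of_word w) \<mu>) else 0)"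
    unfolding Khat_def A_def f_def by simp
qed

end
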